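(* Let $L=2\pi$ and $k\in\mathbb{Z}\setminus\{0\}$. For $j=1,2$ let $\mathbf{u}^{in}_j\in V^3$ have zero spatial mean and satisfy $\mathbf{u}^{in}_j(\mathbf{x}+\tfrac{L}{k}\mathbf{e}_i)=\mathbf{u}^{in}_j(\mathbf{x})$ for all $\mathbf{x}\in\mathbb{R}^2$ and $i=1,2$, and assume $\|\mathbf{u}^{in}_1\|_H\neq\|\mathbf{u}^{in}_2\|_H$. Let $\mathbf{u}_j$ be the solution of the 2D incompressible Euler equations $$\mathbf{u}_t+\mathbf{u}\cdot\nabla\mathbf{u}=-\nabla p,\qquad\nabla\cdot\mathbf{u}=0$$ on $\mathbb{T}^2$ with initial data $\mathbf{u}^{in}_j$. Then for every $M<|k|$ and all $t\ge0$, $$P_M(\mathbf{u}_1(\cdot,t)-\mathbf{u}_2(\cdot,t))=0,$$ and $$\limsup_{t\to\infty}\|\mathbf{u}_1(\cdot,t)-\mathbf{u}_2(\cdot,t)\|_H>0.$$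
   Context: $\mathbb{T}^2=[0,2\pi)^2$ with periodic boundary conditions; $\mathbf{e}_1,\mathbf{e}_2$ are the standard basis vectors. Let $\mathcal{V}$ be the set of $\mathbb{R}^2$-valued $2\pi$-periodic trigonometric polynomials $\varphi$ with $\nabla\cdot\varphi=0$ and $\int_{\mathbb{T}^2}\varphi=0$; $H$ is the closure of $\mathcal{V}$ in $L^2$ (norm $\|\cdot\|_H=\|\cdot\|_{L^2}$), $V^s$ its closure in the $H^s$ seminorm. $P_M$ is the projection onto the Fourier modes $\mathbf{n}\in\mathbb{Z}^2\setminus\{(0,0)\}$ with $|\mathbf{n}|\le M$. For data in $V^s$, $s\ge3$, the Euler equations are globally well-posed with unique solutions in $C([0,T];V^s)$ and conserve the $H$ norm. *)

theory Defs
  imports "HOL-Analysis.Analysis"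
begin

text \<open>Points of the torus are represented by 2\<pi>-periodic functions on real^2.
  The fundamental domain is the box [0,2\<pi>]^2.\<close>

definition torus_box :: "(real^2) set" where
  "torus_box = cbox 0 (\<chi> i. 2 * pi)"

definition periodic_field :: "(real^2 \<Rightarrow> 'b) \<Rightarrow> bool" where
  "periodic_field f \<longleftrightarrow> (\<forall>x (i::2). f (x + (2 * pi) *\<^sub>R axis i 1) = f x)"

definition fourier_coeff :: "(real^2 \<Rightarrow> real^2) \<Rightarrow> 2 \<Rightarrow> int \<times> int \<Rightarrow> complex" where
  "fourier_coeff f j n =
     integral torus_box (\<lambda>x. complex_of_real (f x $ j) *
        exp (- \<i> * complex_of_real (real_of_int (fst n) * x $ 1 + real_of_int (snd n) * x $ 2)))
     / complex_of_real (4 * pi\<^sup>2)"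

definition H_norm :: "(real^2 \<Rightarrow> real^2) \<Rightarrow> real" where
  "H_norm f = sqrt (integral torus_box (\<lambda>x. (norm (f x))\<^sup>2))"

text \<open>V^3: periodic L^2 fields with zero mean, divergence free (in the Fourier sense)
  and with finite H^3 seminorm; this is the closure of the divergence-free mean-zero
  trigonometric polynomials in the H^3 seminorm.\<close>
definition V3 :: "(real^2 \<Rightarrow> real^2) set" where
  "V3 = {f. periodic_field f \<and>
           f absolutely_integrable_on torus_box \<and>
           (\<lambda>x. (norm (f x))\<^sup>2) integrable_on torus_box \<and>
           integral torus_box f = 0 \<and>
           (\<forall>n. of_int (fst n) * fourier_coeff f 1 n + of_int (snd n) * fourier_coeff f 2 n = 0) \<and>
           (\<lambda>n. (real_of_int (fst n)^2 + real_of_int (snd n)^2)^3 *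
                 ((cmod (fourier_coeff f 1 n))\<^sup>2 + (cmod (fourier_coeff f 2 n))\<^sup>2))
             summable_on (UNIV :: (int \<times> int) set)}"

definition modes :: "real \<Rightarrow> (int \<times> int) set" where
  "modes M = {n. n \<noteq> (0,0) \<and> real_of_int (fst n)^2 + real_of_int (snd n)^2 \<le> M\<^sup>2 \<and> 0 \<le> M}"

definition P_proj :: "real \<Rightarrow> (real^2 \<Rightarrow> real^2) \<Rightarrow> (real^2 \<Rightarrow> real^2)" where
  "P_proj M f = (\<lambda>x. \<chi> j. Re (\<Sum>n\<in>modes M. fourier_coeff f j n *
        exp (\<i> * complex_of_real (real_of_int (fst n) * x $ 1 + real_of_int (snd n) * x $ 2))))"

definition euler_solution :: "(real \<Rightarrow> real^2 \<Rightarrow> real^2) \<Rightarrow> (real^2 \<Rightarrow> real^2) \<Rightarrow> bool" where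
  "euler_solution u u0 \<longleftrightarrow>
     (\<forall>x. u 0 x = u0 x) \<and> (\<forall>t\<ge>0. u t \<in> V3) \<and>
     (\<exists>(ut :: real \<Rightarrow> real^2 \<Rightarrow> real^2) (Du :: real \<Rightarrow> real^2 \<Rightarrow> ((real^2) \<Rightarrow>\<^sub>L (real^2)))
        (p :: real \<Rightarrow> real^2 \<Rightarrow> real) (gp :: real \<Rightarrow> real^2 \<Rightarrow> real^2).
        continuous_on ({0..} \<times> UNIV) (\<lambda>(t,x). u t x) \<and>
        continuous_on ({0..} \<times> UNIV) (\<lambda>(t,x). ut t x) \<and>
        continuous_on ({0..} \<times> UNIV) (\<lambda>(t,x). Du t x) \<and>
        (\<forall>t\<ge>0. periodic_field (p t) \<and>
           (\<forall>x. ((\<lambda>s. u s x) has_vector_derivative ut t x) (at t within {0..}) \<and>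
                (u t has_derivative blinfun_apply (Du t x)) (at x) \<and>
                (p t has_derivative (\<lambda>h. gp t x \<bullet> h)) (at x) \<and>
                (blinfun_apply (Du t x) (axis 1 1)) $ 1 + (blinfun_apply (Du t x) (axis 2 1)) $ 2 = 0 \<and>
                ut t x + blinfun_apply (Du t x) (u t x) = - gp t x)))"

end

theory Submission
  imports Defs
begin

lemma periodic_shift_int:
  assumes "periodic_field f"
  shows "f (x + (2*pi * of_int m) *\<^sub>R axis i 1) = f x"
proof -
  have "\<forall>x. f (x + (2*pi * of_int m) *\<^sub>R axis i 1) = f x"
  proof (induction m rule: int_induct[where k=0])
    case base then show ?case by simp
  next
    case (step1 m)
    show ?case
    proof
      fix x
      have "f (x + (2*pi * of_int (m+1)) *\<^sub>R axis i 1) = f ((x + (2*pi * of_int m) *\<^sub>R axis i 1) + (2*pi) *\<^sub>R axis i 1)"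
        by (simp add: algebra_simps scaleR_add_left)
      also have "\<dots> = f (x + (2*pi * of_int m) *\<^sub>R axis i 1)" using assms unfolding periodic_field_def by blast
      finally show "f (x + (2*pi * of_int (m+1)) *\<^sub>R axis i 1) = f x" using step1 by simp
    qed
  next
    case (step2 m)
    show ?case
    proof
      fix x
      have "f (x + (2*pi * of_int m) *\<^sub>R axis i 1) = f ((x + (2*pi * of_int (m-1)) *\<^sub>R axis i 1) + (2*pi) *\<^sub>R axis i 1)"
        by (simp add: algebra_simps scaleR_add_left)
      also have "\<dots> = f (x + (2*pi * of_int (m-1)) *\<^sub>R axis i 1)" using assms unfolding periodic_field_def by blast
      finally show "f (x + (2*pi * of_int (m-1)) *\<^sub>R axis i 1) = f x" using step2 by simp
    qed
  qed
  then show ?thesis by blast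
qed

lemma axis_nth2: "axis i x $ j = (if j = i then x else 0)" by (simp add: axis_def)
lemma inner_e: "x \<bullet> axis i 1 = x$i" by (simp add: inner_axis)

lemma box_eq: "torus_box = cbox 0 (\<chi> i. 2*pi)" by (simp add: torus_box_def)

lemma periodic_zero_on_box:
  assumes "periodic_field f" "\<And>x. x \<in> torus_box \<Longrightarrow> f x = 0"
  shows "f x = 0"
proof -
  define m1 where "m1 = \<lfloor>x$1 / (2*pi)\<rfloor>"
  define m2 where "m2 = \<lfloor>x$2 / (2*pi)\<rfloor>"
  define y where "y = x + (2*pi * of_int (-m1)) *\<^sub>R axis 1 1 + (2*pi * of_int (-m2)) *\<^sub>R axis 2 1"
  have "f y = f (x + (2*pi * of_int (-m1)) *\<^sub>R axis 1 1)"
    unfolding y_def by (rule periodic_shift_int[OF assms(1)])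
  also have "\<dots> = f x" by (rule periodic_shift_int[OF assms(1)])
  finally have fy: "f y = f x" .
  have bnd: "0 \<le> z - 2*pi*\<lfloor>z/(2*pi)\<rfloor> \<and> z - 2*pi*\<lfloor>z/(2*pi)\<rfloor> \<le> 2*pi" for z :: real
  proof -
    have "\<lfloor>z/(2*pi)\<rfloor> \<le> z/(2*pi)" "z/(2*pi) < \<lfloor>z/(2*pi)\<rfloor> + 1" by linarith+
    then have "2*pi*\<lfloor>z/(2*pi)\<rfloor> \<le> 2*pi*(z/(2*pi))" "2*pi*(z/(2*pi)) < 2*pi*(\<lfloor>z/(2*pi)\<rfloor> + 1)"
      using pi_gt_zero by (intro mult_left_mono mult_strict_left_mono; simp)+
    then have "2*pi*\<lfloor>z/(2*pi)\<rfloor> \<le> z" "z < 2*pi*(\<lfloor>z/(2*pi)\<rfloor> + 1)"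
      by simp_all
    then show ?thesis by (simp add: algebra_simps)
  qed
  have "y \<in> torus_box"
    unfolding box_eq mem_box_cart
  proof
    fix i :: 2
    show "0 $ i \<le> y $ i \<and> y $ i \<le> (\<chi> i. 2 * pi) $ i"
      using bnd[of "x$1"] bnd[of "x$2"] exhaust_2[of i]
      by (auto simp: y_def m1_def m2_def axis_def)
  qed
  then show ?thesis using fy assms(2) by simp
qed

lemma shift_integral:
  fixes f :: "real^2 \<Rightarrow> 'b::banach"
  assumes "continuous_on UNIV f"
  shows "integral (cbox a b) (\<lambda>x. f (x + c)) = integral (cbox (a+c) (b+c)) f"
proof -
  have "f integrable_on cbox (a+c) (b+c)"
    using assms by (intro integrable_continuous) (auto intro: continuous_on_subset)
  then have "(f has_integral integral (cbox (a+c) (b+c)) f) (cbox (a+c) (b+c))" by blast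
  then have "((f \<circ> (+) c) has_integral integral (cbox (a+c) (b+c)) f) (cbox a b)"
    using has_integral_shift_cbox_iff by blast
  then show ?thesis by (simp add: o_def add.commute integral_unique)
qed

lemma translate_basic:
  fixes f :: "real^2 \<Rightarrow> 'b::banach"
  assumes cont: "continuous_on UNIV f" and per: "periodic_field f"
    and c: "0 \<le> c" "c \<le> 2*pi"
  shows "integral torus_box (\<lambda>x. f (x + c *\<^sub>R axis i 1)) = integral torus_box f"
proof -
  define e :: "real^2" where "e = axis i 1"
  define b :: "real^2" where "b = (\<chi> j. 2*pi)"
  define bc :: "real^2" where "bc = (\<chi> j. if j = i then c else 2*pi)"
  have eB: "e \<in> Basis" unfolding e_def by (simp add: Basis_vec_def) blast
  have intg: "f integrable_on cbox u v" for u v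
    using cont by (intro integrable_continuous) (auto intro: continuous_on_subset)
  have 1: "integral torus_box (\<lambda>x. f (x + c *\<^sub>R e)) = integral (cbox (c *\<^sub>R e) (b + c *\<^sub>R e)) f"
    unfolding box_eq b_def[symmetric] using shift_integral[OF cont, of 0 b "c *\<^sub>R e"] by simp
  have S1: "cbox (c *\<^sub>R e) (b + c *\<^sub>R e) \<inter> {x. x \<bullet> e \<le> 2*pi} = cbox (c *\<^sub>R e) b"
    using c exhaust_2[of i] by (auto simp: mem_box_cart forall_2 inner_e axis_nth2 e_def b_def bc_def)
  have S2: "cbox (c *\<^sub>R e) (b + c *\<^sub>R e) \<inter> {x. 2*pi \<le> x \<bullet> e} = cbox (0 + (2*pi) *\<^sub>R e) (bc + (2*pi) *\<^sub>R e)"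
    using c exhaust_2[of i] by (auto simp: mem_box_cart forall_2 inner_e axis_nth2 e_def b_def bc_def)
  have S3: "cbox 0 b \<inter> {x. x \<bullet> e \<le> c} = cbox 0 bc"
    using c exhaust_2[of i] by (auto simp: mem_box_cart forall_2 inner_e axis_nth2 e_def b_def bc_def)
  have S4: "cbox 0 b \<inter> {x. c \<le> x \<bullet> e} = cbox (c *\<^sub>R e) b"
    using c exhaust_2[of i] by (auto simp: mem_box_cart forall_2 inner_e axis_nth2 e_def b_def bc_def)
  have 2: "integral (cbox (c *\<^sub>R e) (b + c *\<^sub>R e)) f = integral (cbox (c *\<^sub>R e) b) f + integral (cbox (0 + (2*pi) *\<^sub>R e) (bc + (2*pi) *\<^sub>R e)) f"
    using integral_split[OF intg eB, of "c *\<^sub>R e" "b + c *\<^sub>R e" "2*pi"] S1 S2 by simp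
  have 3: "integral (cbox (0 + (2*pi) *\<^sub>R e) (bc + (2*pi) *\<^sub>R e)) f = integral (cbox 0 bc) f"
  proof -
    have "integral (cbox (0 + (2*pi) *\<^sub>R e) (bc + (2*pi) *\<^sub>R e)) f = integral (cbox 0 bc) (\<lambda>x. f (x + (2*pi) *\<^sub>R e))"
      using shift_integral[OF cont, of 0 bc "(2*pi) *\<^sub>R e"] by simp
    also have "\<dots> = integral (cbox 0 bc) f"
      using per unfolding periodic_field_def e_def by simp
    finally show ?thesis .
  qed
  have 4: "integral (cbox 0 b) f = integral (cbox 0 bc) f + integral (cbox (c *\<^sub>R e) b) f"
    using integral_split[OF intg eB, of 0 b c] S3 S4 by simp
  have "integral torus_box (\<lambda>x. f (x + c *\<^sub>R axis i 1)) = integral torus_box (\<lambda>x. f (x + c *\<^sub>R e))"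
    by (simp add: e_def)
  also have "\<dots> = integral (cbox 0 b) f" using 1 2 3 4 by (metis add.commute)
  also have "\<dots> = integral torus_box f" by (simp add: box_eq b_def)
  finally show ?thesis .
qed

lemma translate_invariant:
  fixes f :: "real^2 \<Rightarrow> 'b::banach"
  assumes cont: "continuous_on UNIV f" and per: "periodic_field f"
  shows "integral torus_box (\<lambda>x. f (x + c *\<^sub>R axis i 1)) = integral torus_box f"
proof -
  define m where "m = \<lfloor>c / (2*pi)\<rfloor>"
  define c0 where "c0 = c - 2*pi*m"
  have "real_of_int m \<le> c/(2*pi)" "c/(2*pi) < m + 1" unfolding m_def by linarith+
  then have "2*pi*m \<le> 2*pi*(c/(2*pi))" "2*pi*(c/(2*pi)) < 2*pi*(m + 1)"
    using pi_gt_zero by (intro mult_left_mono mult_strict_left_mono; simp)+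
  then have c0: "0 \<le> c0" "c0 \<le> 2*pi" unfolding c0_def by (simp_all add: algebra_simps)
  have "f (x + c *\<^sub>R axis i 1) = f (x + c0 *\<^sub>R axis i 1)" for x
  proof -
    have ceq: "c *\<^sub>R axis i 1 = c0 *\<^sub>R axis i 1 + (2*pi * of_int m) *\<^sub>R axis i 1"
      unfolding scaleR_add_left[symmetric] c0_def by simp
    have "x + c *\<^sub>R axis i 1 = (x + c0 *\<^sub>R axis i 1) + (2*pi * of_int m) *\<^sub>R axis i 1"
      unfolding ceq by (simp add: add.assoc)
    then show ?thesis using periodic_shift_int[OF per, of "x + c0 *\<^sub>R axis i 1" m i] by (simp only: add.assoc)
  qed
  then have "integral torus_box (\<lambda>x. f (x + c *\<^sub>R axis i 1)) = integral torus_box (\<lambda>x. f (x + c0 *\<^sub>R axis i 1))"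
    by simp
  also have "\<dots> = integral torus_box f" by (rule translate_basic[OF cont per c0])
  finally show ?thesis .
qed


lemma deriv_integral_zero:
  fixes g :: "real^2 \<Rightarrow> real"
  assumes cont: "continuous_on UNIV g" and per: "periodic_field g"
    and der: "\<And>x. (g has_derivative g' x) (at x)"
    and dcont: "continuous_on UNIV (\<lambda>x. g' x (axis i 1))"
  shows "integral torus_box (\<lambda>x. g' x (axis i 1)) = 0"
proof -
  define e :: "real^2" where "e = axis i 1"
  define d where "d x = g' x e" for x
  define K :: "(real^2) set" where "K = cbox (\<chi> j. -1) (\<chi> j. 2*pi+1)"
  define C where "C = Henstock_Kurzweil_Integration.content torus_box"
  have C0: "0 \<le> C" unfolding C_def by simp
  have ne: "norm e = 1" unfolding e_def by simp
  have lin: "linear (g' x)" for x using der has_derivative_linear by blast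
  have uc: "uniformly_continuous_on K d"
    unfolding K_def d_def e_def
    by (rule compact_uniformly_continuous) (auto intro: continuous_on_subset[OF dcont])
  have dint: "d integrable_on torus_box"
    unfolding d_def e_def box_eq
    by (rule integrable_continuous) (auto intro: continuous_on_subset[OF dcont])
  have gsint: "(\<lambda>x. g (x + c)) integrable_on torus_box" for c
    unfolding box_eq
    by (rule integrable_continuous)
       (auto intro!: continuous_on_compose2[OF cont] continuous_intros)
  have gint: "g integrable_on torus_box"
    using gsint[of 0] by simp
  have key: "\<bar>integral torus_box d\<bar> \<le> \<epsilon> * C" if \<epsilon>: "\<epsilon> > 0" for \<epsilon>
  proof -
    obtain \<delta> where \<delta>: "\<delta> > 0" and \<delta>d: "\<And>x y. x \<in> K \<Longrightarrow> y \<in> K \<Longrightarrow> dist y x < \<delta> \<Longrightarrow> dist (d y) (d x) < \<epsilon>"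
      using uc \<epsilon> unfolding uniformly_continuous_on_def by metis
    define h where "h = min (\<delta>/2) (1/2)"
    have h: "0 < h" "h < \<delta>" "h \<le> 1" unfolding h_def using \<delta> by auto
    define DQ where "DQ x = (g (x + h *\<^sub>R e) - g x) / h" for x
    have pt: "norm (d x - DQ x) \<le> \<epsilon>" if x: "x \<in> torus_box" for x
    proof -
      define \<phi> where "\<phi> s = g (x + s *\<^sub>R e)" for s
      have "(\<phi> has_derivative (\<lambda>s'. g' (x + s *\<^sub>R e) (s' *\<^sub>R e))) (at s within {0..h})" for s
        unfolding \<phi>_def
        by (rule has_derivative_compose[OF _ der]) (auto intro!: derivative_eq_intros)
      then obtain z where z: "z \<in> {0<..<h}" and mv: "\<phi> h - \<phi> 0 = g' (x + z *\<^sub>R e) ((h - 0) *\<^sub>R e)"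
        using mvt_simple[of 0 h \<phi> "\<lambda>s s'. g' (x + s *\<^sub>R e) (s' *\<^sub>R e)"] h by blast
      have "\<phi> h - \<phi> 0 = h * d (x + z *\<^sub>R e)"
        using mv linear_cmul[OF lin] unfolding d_def by simp
      then have dq: "DQ x = d (x + z *\<^sub>R e)"
        unfolding DQ_def \<phi>_def using h by (simp add: field_simps)
      have xK: "x \<in> K" using x unfolding K_def box_eq mem_box_cart by (auto simp: forall_2)
      have "x + z *\<^sub>R e \<in> K"
        using x z h exhaust_2[of i] unfolding K_def box_eq mem_box_cart e_def
        by (auto simp: forall_2 axis_nth2)
      moreover have "dist (x + z *\<^sub>R e) x < \<delta>" using z h ne by (simp add: dist_norm)
      ultimately have "dist (d (x + z *\<^sub>R e)) (d x) < \<epsilon>" using \<delta>d xK by blast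
      then show ?thesis using dq by (simp add: dist_norm norm_minus_commute)
    qed
    have "integral torus_box DQ = (integral torus_box (\<lambda>x. g (x + h *\<^sub>R e)) - integral torus_box g) / h"
      unfolding DQ_def by (simp add: integral_diff[OF gsint gint])
    also have "\<dots> = 0"
      unfolding e_def using translate_invariant[OF cont per, of h i] by simp
    finally have DQ0: "integral torus_box DQ = 0" .
    have DQint: "DQ integrable_on torus_box"
      unfolding DQ_def using integrable_diff[OF gsint gint] by (intro integrable_on_divide)
    have "integral torus_box d = integral torus_box (\<lambda>x. d x - DQ x)"
      using integral_diff[OF dint DQint] DQ0 by simp
    also have "\<bar>\<dots>\<bar> \<le> \<epsilon> * C"
      unfolding C_def box_eq
      using integrable_bound[of \<epsilon> "\<lambda>x. d x - DQ x" 0 "\<chi> j. 2*pi"] integrable_diff[OF dint DQint] pt \<epsilon>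
      by (simp add: box_eq)
    finally show ?thesis .
  qed
  have "integral torus_box d = 0"
  proof (rule ccontr)
    assume ne0: "integral torus_box d \<noteq> 0"
    show False
    proof (cases "C = 0")
      case True then show False using key[of 1] ne0 by simp
    next
      case False
      then have Cp: "C > 0" using C0 by simp
      define \<epsilon> where "\<epsilon> = \<bar>integral torus_box d\<bar> / (2*C)"
      have "\<epsilon> > 0" using ne0 Cp unfolding \<epsilon>_def by simp
      from key[OF this] have "\<bar>integral torus_box d\<bar> \<le> \<bar>integral torus_box d\<bar> / 2"
        unfolding \<epsilon>_def using Cp by simp
      then show False using ne0 by simp
    qed
  qed
  then show ?thesis unfolding d_def e_def .
qed


lemma exp_2pi_int: "exp (- \<i> * complex_of_real (2*pi * of_int m)) = 1"
proof -
  have "Im (- \<i> * complex_of_real (2*pi * of_int m)) = of_int (2 * (-m)) * pi" by simp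
  then show ?thesis unfolding exp_eq_1 by (intro conjI exI[of _ "-m"]) simp_all
qed

lemma fourier_vanish:
  fixes f :: "real^2 \<Rightarrow> real^2" and k :: int and i :: 2
  assumes cont: "continuous_on UNIV f" and per: "periodic_field f"
    and sym: "\<And>x. f (x + (2*pi / real_of_int k) *\<^sub>R axis i 1) = f x"
    and k: "k \<noteq> 0"
    and nn: "nn = (if i = 1 then fst n else snd n)"
    and ni: "nn \<noteq> 0" "\<bar>nn\<bar> < \<bar>k\<bar>"
  shows "fourier_coeff f j n = 0"
proof -
  define ph where "ph x = real_of_int (fst n) * x$1 + real_of_int (snd n) * x$2" for x :: "real^2"
  define nl where "nl l = (if l = 1 then fst n else snd n)" for l :: 2
  have phs: "ph (x + c *\<^sub>R axis l 1) = ph x + c * nl l" for x c l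
    using exhaust_2[of l] by (auto simp: ph_def nl_def axis_nth2 algebra_simps)
  define G where "G x = complex_of_real (f x $ j) * exp (- \<i> * complex_of_real (ph x))" for x
  have Gs: "G (x + c *\<^sub>R axis l 1) = complex_of_real (f (x + c *\<^sub>R axis l 1) $ j) * exp (- \<i> * complex_of_real (ph x)) * exp (- \<i> * complex_of_real (c * nl l))" for x c l
  proof -
    have "exp (- \<i> * complex_of_real (ph (x + c *\<^sub>R axis l 1))) = exp (- \<i> * complex_of_real (ph x)) * exp (- \<i> * complex_of_real (c * nl l))"
      unfolding phs exp_add[symmetric] by (simp add: algebra_simps)
    then show ?thesis unfolding G_def by (simp add: mult.assoc)
  qed
  have Gcont: "continuous_on UNIV G"
    unfolding G_def ph_def by (intro continuous_intros cont)
  have Gper: "periodic_field G"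
    unfolding periodic_field_def
  proof (intro allI)
    fix x l
    have "exp (- \<i> * complex_of_real ((2*pi) * nl l)) = 1" using exp_2pi_int[of "nl l"] by simp
    then show "G (x + (2 * pi) *\<^sub>R axis l 1) = G x"
      unfolding Gs using per unfolding periodic_field_def G_def by simp
  qed
  define a where "a = 2*pi / real_of_int k"
  define E where "E = exp (- \<i> * complex_of_real (a * nn))"
  have "nl i = nn" unfolding nl_def nn by simp
  then have "G (x + a *\<^sub>R axis i 1) = G x * E" for x
    unfolding Gs E_def a_def using sym unfolding G_def by simp
  then have "integral torus_box G * E = integral torus_box G"
    using translate_invariant[OF Gcont Gper, of a i] by simp
  moreover have "E \<noteq> 1"
  proof
    assume "E = 1"
    then obtain m :: int where m: "- (a * nn) = of_int (2*m) * pi"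
      unfolding E_def exp_eq_1 by auto
    then have "- (2*pi * nn) = 2 * pi * (m * k)"
      unfolding a_def using k by (simp add: field_simps)
    then have "pi * (- real_of_int nn) = pi * real_of_int (m*k)" by (simp add: algebra_simps)
    then have "- real_of_int nn = real_of_int (m * k)" using pi_gt_zero by (subst (asm) mult_left_cancel) auto
    then have nmk: "- nn = m * k" by linarith
    show False
    proof (cases "m = 0")
      case True then show False using nmk ni by simp
    next
      case False
      then have "\<bar>m\<bar> \<ge> 1" by linarith
      then have "\<bar>m\<bar> * \<bar>k\<bar> \<ge> 1 * \<bar>k\<bar>" by (intro mult_right_mono) auto
      then have "\<bar>m * k\<bar> \<ge> \<bar>k\<bar>" by (simp add: abs_mult)
      then show False using nmk ni by simp
    qed
  qed
  ultimately have "integral torus_box G = 0"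
    by (metis mult.right_neutral right_minus_eq right_diff_distrib mult_eq_0_iff)
  then show ?thesis unfolding fourier_coeff_def G_def ph_def by simp
qed


definition sol :: "(real \<Rightarrow> real^2 \<Rightarrow> real^2) \<Rightarrow> (real \<Rightarrow> real^2 \<Rightarrow> real^2) \<Rightarrow> (real \<Rightarrow> real^2 \<Rightarrow> ((real^2) \<Rightarrow>\<^sub>L (real^2))) \<Rightarrow> (real \<Rightarrow> real^2 \<Rightarrow> real) \<Rightarrow> (real \<Rightarrow> real^2 \<Rightarrow> real^2) \<Rightarrow> bool" where
 "sol u ut Du p gp \<longleftrightarrow>
        continuous_on ({0..} \<times> UNIV) (\<lambda>(t,x). u t x) \<and>
        continuous_on ({0..} \<times> UNIV) (\<lambda>(t,x). ut t x) \<and>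
        continuous_on ({0..} \<times> UNIV) (\<lambda>(t,x). Du t x) \<and>
        (\<forall>t\<ge>0. periodic_field (u t) \<and> periodic_field (p t) \<and>
           (\<forall>x. ((\<lambda>s. u s x) has_vector_derivative ut t x) (at t within {0..}) \<and>
                (u t has_derivative blinfun_apply (Du t x)) (at x) \<and>
                (p t has_derivative (\<lambda>h. gp t x \<bullet> h)) (at x) \<and>
                (blinfun_apply (Du t x) (axis 1 1)) $ 1 + (blinfun_apply (Du t x) (axis 2 1)) $ 2 = 0 \<and>
                ut t x + blinfun_apply (Du t x) (u t x) = - gp t x))"

lemma euler_sol:
  assumes "euler_solution u u0"
  shows "\<exists>ut Du p gp. sol u ut Du p gp"
  using assms unfolding euler_solution_def sol_def V3_def by blast

lemma cont_slice:
  assumes "continuous_on ({0..} \<times> UNIV) (\<lambda>(t,x). F t x)" "t \<ge> 0"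
  shows "continuous_on UNIV (F t)"
proof -
  have "continuous_on UNIV ((\<lambda>(t,x). F t x) \<circ> (\<lambda>x. (t,x)))"
    by (rule continuous_on_compose[OF _ continuous_on_subset[OF assms(1)]])
       (use assms(2) in \<open>auto intro!: continuous_intros\<close>)
  then show ?thesis by (simp add: o_def)
qed

lemma sol_facts:
  assumes "sol u ut Du p gp" "t \<ge> 0"
  shows "continuous_on UNIV (u t)" "continuous_on UNIV (ut t)" "continuous_on UNIV (Du t)"
    "continuous_on UNIV (p t)" "continuous_on UNIV (gp t)"
    "periodic_field (u t)" "periodic_field (p t)"
    "\<And>x. (u t has_derivative blinfun_apply (Du t x)) (at x)"
    "\<And>x. (p t has_derivative (\<lambda>h. gp t x \<bullet> h)) (at x)"
    "\<And>x. (blinfun_apply (Du t x) (axis 1 1)) $ 1 + (blinfun_apply (Du t x) (axis 2 1)) $ 2 = 0"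
    "\<And>x. ut t x + blinfun_apply (Du t x) (u t x) = - gp t x"
    "\<And>x. ((\<lambda>s. u s x) has_vector_derivative ut t x) (at t within {0..})"
proof -
  note s = assms(1)[unfolded sol_def]
  show c1: "continuous_on UNIV (u t)" "continuous_on UNIV (ut t)" "continuous_on UNIV (Du t)"
    using cont_slice s assms(2) by blast+
  show "periodic_field (u t)" "periodic_field (p t)"
    "\<And>x. (u t has_derivative blinfun_apply (Du t x)) (at x)"
    "\<And>x. (p t has_derivative (\<lambda>h. gp t x \<bullet> h)) (at x)"
    "\<And>x. (blinfun_apply (Du t x) (axis 1 1)) $ 1 + (blinfun_apply (Du t x) (axis 2 1)) $ 2 = 0"
    "\<And>x. ut t x + blinfun_apply (Du t x) (u t x) = - gp t x"
    "\<And>x. ((\<lambda>s. u s x) has_vector_derivative ut t x) (at t within {0..})"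
    using s assms(2) by blast+
  show "continuous_on UNIV (p t)"
    using s assms(2) by (meson continuous_at_imp_continuous_on has_derivative_continuous)
  have "gp t = (\<lambda>x. - (ut t x + blinfun_apply (Du t x) (u t x)))"
    using s assms(2) by (auto simp: fun_eq_iff)
  then show "continuous_on UNIV (gp t)"
    using c1 by (auto intro!: continuous_intros)
qed


definition Gd :: "2 \<Rightarrow> real^2 \<Rightarrow> real^2 \<Rightarrow> real^2 \<Rightarrow> real^2 \<Rightarrow> ((real^2) \<Rightarrow>\<^sub>L (real^2)) \<Rightarrow> ((real^2) \<Rightarrow>\<^sub>L (real^2)) \<Rightarrow> real \<Rightarrow> real \<Rightarrow> real^2 \<Rightarrow> real" where
  "Gd l U V gu gv A B P Q h = (A h $ l) * ((U-V) \<bullet> (U-V)) / 2 + (U$l) * ((U-V) \<bullet> (A h - B h))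
     + ((gu - gv) \<bullet> h) * ((U-V) $ l) + (P - Q) * ((A h - B h) $ l)"

lemma vec_decomp: "(y::real^2) = y$1 *\<^sub>R axis 1 1 + y$2 *\<^sub>R axis 2 1"
  by (simp add: vec_eq_iff forall_2 axis_nth2)

lemma blin_decomp: "blinfun_apply A (y::real^2) = y$1 *\<^sub>R A (axis 1 1) + y$2 *\<^sub>R A (axis 2 1)"
  by (subst vec_decomp) (simp add: blinfun.add_right blinfun.scaleR_right)

lemma inner2: "(a::real^2) \<bullet> b = a$1 * b$1 + a$2 * b$2"
  by (simp add: inner_vec_def sum_2)

lemma alg:
  fixes U V gu gv ut vt :: "real^2" and A B :: "(real^2) \<Rightarrow>\<^sub>L (real^2)" and P Q :: real
  assumes dA: "A (axis 1 1) $ 1 + A (axis 2 1) $ 2 = 0" and dB: "B (axis 1 1) $ 1 + B (axis 2 1) $ 2 = 0"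
    and eU: "ut + A U = - gu" and eV: "vt + B V = - gv"
  shows "(U - V) \<bullet> (ut - vt) = - (Gd 1 U V gu gv A B P Q (axis 1 1) + Gd 2 U V gu gv A B P Q (axis 2 1)) - (U - V) \<bullet> B (U - V)"
proof -
  have ut: "ut = - gu - A U" using eU by (simp add: algebra_simps)
  have vt: "vt = - gv - B V" using eV by (simp add: algebra_simps)
  have a22: "A (axis 2 1) $ 2 = - A (axis 1 1) $ 1" using dA by simp
  have b22: "B (axis 2 1) $ 2 = - B (axis 1 1) $ 1" using dB by simp
  show ?thesis
    unfolding ut vt Gd_def
    apply (simp only: blin_decomp[of A U] blin_decomp[of B V] blin_decomp[of B "U - V"])
    apply (simp add: inner2 a22 b22 inner_e axis_nth2)
    apply (simp add: algebra_simps)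
    done
qed

lemma spatial:
  assumes su: "sol u ut Du p gp" and sv: "sol v vt Dv q gq" and t: "t \<ge> 0"
  shows "integral torus_box (\<lambda>x. (u t x - v t x) \<bullet> (ut t x - vt t x)) =
         - integral torus_box (\<lambda>x. (u t x - v t x) \<bullet> blinfun_apply (Dv t x) (u t x - v t x))"
proof -
  note fu = sol_facts[OF su t] and fv = sol_facts[OF sv t]
  define G where "G l x = (u t x $ l) * (((u t x - v t x) \<bullet> (u t x - v t x)) / 2) + (p t x - q t x) * ((u t x - v t x) $ l)" for l x
  define G' where "G' l x h = Gd l (u t x) (v t x) (gp t x) (gq t x) (Du t x) (Dv t x) (p t x) (q t x) h" for l x h
  have Gder: "(G l has_derivative G' l x) (at x)" for l x
  proof -
    have dU: "((\<lambda>x. u t x $ l) has_derivative (\<lambda>h. blinfun_apply (Du t x) h $ l)) (at x)"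
      by (rule bounded_linear.has_derivative[OF bounded_linear_vec_nth fu(8)])
    have dW: "((\<lambda>x. u t x - v t x) has_derivative (\<lambda>h. blinfun_apply (Du t x) h - blinfun_apply (Dv t x) h)) (at x)"
      by (rule has_derivative_diff[OF fu(8) fv(8)])
    have dWl: "((\<lambda>x. (u t x - v t x) $ l) has_derivative (\<lambda>h. (blinfun_apply (Du t x) h - blinfun_apply (Dv t x) h) $ l)) (at x)"
      by (rule bounded_linear.has_derivative[OF bounded_linear_vec_nth dW])
    have dWW: "((\<lambda>x. (u t x - v t x) \<bullet> (u t x - v t x)) has_derivative
       (\<lambda>h. (u t x - v t x) \<bullet> (blinfun_apply (Du t x) h - blinfun_apply (Dv t x) h) + (blinfun_apply (Du t x) h - blinfun_apply (Dv t x) h) \<bullet> (u t x - v t x))) (at x)"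
      by (rule has_derivative_inner[OF dW dW])
    have dPQ: "((\<lambda>x. p t x - q t x) has_derivative (\<lambda>h. gp t x \<bullet> h - gq t x \<bullet> h)) (at x)"
      by (rule has_derivative_diff[OF fu(9) fv(9)])
    have dWW2: "((\<lambda>x. ((u t x - v t x) \<bullet> (u t x - v t x)) / 2) has_derivative
       (\<lambda>h. ((u t x - v t x) \<bullet> (blinfun_apply (Du t x) h - blinfun_apply (Dv t x) h) + (blinfun_apply (Du t x) h - blinfun_apply (Dv t x) h) \<bullet> (u t x - v t x)) / 2)) (at x)"
      by (rule bounded_linear.has_derivative[OF bounded_linear_divide dWW])
    have "(G l has_derivative (\<lambda>h. (u t x $ l) * (((u t x - v t x) \<bullet> (blinfun_apply (Du t x) h - blinfun_apply (Dv t x) h) + (blinfun_apply (Du t x) h - blinfun_apply (Dv t x) h) \<bullet> (u t x - v t x)) / 2)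
          + (blinfun_apply (Du t x) h $ l) * (((u t x - v t x) \<bullet> (u t x - v t x)) / 2)
          + ((p t x - q t x) * ((blinfun_apply (Du t x) h - blinfun_apply (Dv t x) h) $ l) + (gp t x \<bullet> h - gq t x \<bullet> h) * ((u t x - v t x) $ l)))) (at x)"
      unfolding G_def
      by (intro has_derivative_add has_derivative_mult dU dWW2 dPQ dWl)
    moreover have "(\<lambda>h. (u t x $ l) * (((u t x - v t x) \<bullet> (blinfun_apply (Du t x) h - blinfun_apply (Dv t x) h) + (blinfun_apply (Du t x) h - blinfun_apply (Dv t x) h) \<bullet> (u t x - v t x)) / 2)
          + (blinfun_apply (Du t x) h $ l) * (((u t x - v t x) \<bullet> (u t x - v t x)) / 2)
          + ((p t x - q t x) * ((blinfun_apply (Du t x) h - blinfun_apply (Dv t x) h) $ l) + (gp t x \<bullet> h - gq t x \<bullet> h) * ((u t x - v t x) $ l))) = G' l x"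
    proof (rule ext)
      fix h
      show "(u t x $ l) * (((u t x - v t x) \<bullet> (blinfun_apply (Du t x) h - blinfun_apply (Dv t x) h) + (blinfun_apply (Du t x) h - blinfun_apply (Dv t x) h) \<bullet> (u t x - v t x)) / 2)
          + (blinfun_apply (Du t x) h $ l) * (((u t x - v t x) \<bullet> (u t x - v t x)) / 2)
          + ((p t x - q t x) * ((blinfun_apply (Du t x) h - blinfun_apply (Dv t x) h) $ l) + (gp t x \<bullet> h - gq t x \<bullet> h) * ((u t x - v t x) $ l)) = G' l x h"
        apply (subst inner_commute[of "blinfun_apply (Du t x) h - blinfun_apply (Dv t x) h"])
        apply (simp add: G'_def Gd_def algebra_simps)
        apply (simp add: field_simps)
        done
    qed
    ultimately show ?thesis by simp
  qed
  have Gcont: "continuous_on UNIV (G l)" for l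
    unfolding G_def by (auto intro!: continuous_intros fu(1) fv(1) fu(4) fv(4))
  have Gper: "periodic_field (G l)" for l
    using fu(6) fu(7) fv(6) fv(7) unfolding periodic_field_def G_def by simp
  have dcont: "continuous_on UNIV (\<lambda>x. G' l x (axis l 1))" for l
    unfolding G'_def Gd_def by (auto intro!: continuous_intros fu(1-5) fv(1-5))
  have z: "integral torus_box (\<lambda>x. G' l x (axis l 1)) = 0" for l
    by (rule deriv_integral_zero[OF Gcont Gper Gder dcont])
  have intd: "(\<lambda>x. G' l x (axis l 1)) integrable_on torus_box" for l
    unfolding box_eq by (rule integrable_continuous) (auto intro: continuous_on_subset[OF dcont])
  have contX: "continuous_on UNIV (\<lambda>x. (u t x - v t x) \<bullet> blinfun_apply (Dv t x) (u t x - v t x))"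
    by (intro continuous_intros fu(1-5) fv(1-5))
  have intX: "(\<lambda>x. (u t x - v t x) \<bullet> blinfun_apply (Dv t x) (u t x - v t x)) integrable_on torus_box"
    unfolding box_eq by (rule integrable_continuous) (auto intro: continuous_on_subset[OF contX])
  have pw: "(u t x - v t x) \<bullet> (ut t x - vt t x) = - (G' 1 x (axis 1 1) + G' 2 x (axis 2 1)) - (u t x - v t x) \<bullet> blinfun_apply (Dv t x) (u t x - v t x)" for x
    unfolding G'_def by (rule alg[OF fu(10) fv(10) fu(11) fv(11)])
  have "integral torus_box (\<lambda>x. (u t x - v t x) \<bullet> (ut t x - vt t x)) =
        integral torus_box (\<lambda>x. - (G' 1 x (axis 1 1) + G' 2 x (axis 2 1)) - (u t x - v t x) \<bullet> blinfun_apply (Dv t x) (u t x - v t x))"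
    unfolding pw ..
  also have "\<dots> = - (integral torus_box (\<lambda>x. G' 1 x (axis 1 1)) + integral torus_box (\<lambda>x. G' 2 x (axis 2 1))) - integral torus_box (\<lambda>x. (u t x - v t x) \<bullet> blinfun_apply (Dv t x) (u t x - v t x))"
  proof -
    have i1: "(\<lambda>x. - (G' 1 x (axis 1 1) + G' 2 x (axis 2 1))) integrable_on torus_box"
      by (intro integrable_neg integrable_add intd)
    have "integral torus_box (\<lambda>x. - (G' 1 x (axis 1 1) + G' 2 x (axis 2 1)) - (u t x - v t x) \<bullet> blinfun_apply (Dv t x) (u t x - v t x))
      = integral torus_box (\<lambda>x. - (G' 1 x (axis 1 1) + G' 2 x (axis 2 1))) - integral torus_box (\<lambda>x. (u t x - v t x) \<bullet> blinfun_apply (Dv t x) (u t x - v t x))"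
      by (rule integral_diff[OF i1 intX])
    moreover have "integral torus_box (\<lambda>x. - (G' 1 x (axis 1 1) + G' 2 x (axis 2 1))) = - (integral torus_box (\<lambda>x. G' 1 x (axis 1 1)) + integral torus_box (\<lambda>x. G' 2 x (axis 2 1)))"
      by (simp only: integral_neg integral_add[OF intd intd])
    ultimately show ?thesis by simp
  qed
  also have "\<dots> = - integral torus_box (\<lambda>x. (u t x - v t x) \<bullet> blinfun_apply (Dv t x) (u t x - v t x))"
    using z by simp
  finally show ?thesis .
qed


lemma sol_joint:
  assumes "sol u ut Du p gp"
  shows "continuous_on ({0..} \<times> UNIV) (\<lambda>z. u (fst z) (snd z))"
        "continuous_on ({0..} \<times> UNIV) (\<lambda>z. ut (fst z) (snd z))"
        "continuous_on ({0..} \<times> UNIV) (\<lambda>z. Du (fst z) (snd z))"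
  using assms unfolding sol_def split_beta' by blast+

lemma energy_deriv:
  assumes su: "sol u ut Du p gp" and sv: "sol v vt Dv q gq" and t: "t \<ge> 0"
  shows "((\<lambda>s. integral torus_box (\<lambda>x. (norm (u s x - v s x))\<^sup>2)) has_real_derivative
           (- 2 * integral torus_box (\<lambda>x. (u t x - v t x) \<bullet> blinfun_apply (Dv t x) (u t x - v t x)))) (at t within {0..})"
proof -
  note ju = sol_joint[OF su] and jv = sol_joint[OF sv]
  have L: "((\<lambda>s. integral torus_box (\<lambda>x. (norm (u s x - v s x))\<^sup>2)) has_field_derivative
       integral torus_box (\<lambda>x. 2 * ((u t x - v t x) \<bullet> (ut t x - vt t x)))) (at t within {0..})"
    unfolding box_eq
  proof (rule leibniz_rule_field_derivative[where fx = "\<lambda>s x. 2 * ((u s x - v s x) \<bullet> (ut s x - vt s x))"])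
    fix s :: real and x assume s: "s \<in> {0..}" and x: "x \<in> cbox (0::real^2) (\<chi> j. 2 * pi)"
    have hw: "((\<lambda>s. u s x - v s x) has_derivative (\<lambda>h. h *\<^sub>R (ut s x - vt s x))) (at s within {0..})"
      using has_vector_derivative_diff[OF sol_facts(12)[OF su] sol_facts(12)[OF sv]] s
      unfolding has_vector_derivative_def by simp
    have "((\<lambda>s. (u s x - v s x) \<bullet> (u s x - v s x)) has_derivative
        (\<lambda>h. (u s x - v s x) \<bullet> (h *\<^sub>R (ut s x - vt s x)) + (h *\<^sub>R (ut s x - vt s x)) \<bullet> (u s x - v s x))) (at s within {0..})"
      by (rule has_derivative_inner[OF hw hw])
    moreover have "(\<lambda>h. (u s x - v s x) \<bullet> (h *\<^sub>R (ut s x - vt s x)) + (h *\<^sub>R (ut s x - vt s x)) \<bullet> (u s x - v s x))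
        = (*) (2 * ((u s x - v s x) \<bullet> (ut s x - vt s x)))"
      by (rule ext) (simp add: inner_commute[of "ut s x - vt s x" "u s x - v s x"])
    ultimately show "((\<lambda>s. (norm (u s x - v s x))\<^sup>2) has_field_derivative 2 * ((u s x - v s x) \<bullet> (ut s x - vt s x))) (at s within {0..})"
      unfolding has_field_derivative_def power2_norm_eq_inner by simp
  next
    fix s :: real assume s: "s \<in> {0..}"
    have "continuous_on UNIV (\<lambda>x. (norm (u s x - v s x))\<^sup>2)"
      using s by (auto intro!: continuous_intros sol_facts(1)[OF su] sol_facts(1)[OF sv])
    then show "(\<lambda>x. (norm (u s x - v s x))\<^sup>2) integrable_on cbox 0 (\<chi> j. 2 * pi)"
      by (rule integrable_continuous[OF continuous_on_subset]) auto
  next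
    have "continuous_on ({0..} \<times> UNIV) (\<lambda>z. 2 * ((u (fst z) (snd z) - v (fst z) (snd z)) \<bullet> (ut (fst z) (snd z) - vt (fst z) (snd z))))"
      by (intro continuous_intros ju jv)
    then show "continuous_on ({0..} \<times> cbox 0 (\<chi> j. 2 * pi)) (\<lambda>(s, x). 2 * ((u s x - v s x) \<bullet> (ut s x - vt s x)))"
      unfolding split_beta' by (rule continuous_on_subset) auto
  qed (use t in auto)
  have "integral torus_box (\<lambda>x. 2 * ((u t x - v t x) \<bullet> (ut t x - vt t x))) =
        - 2 * integral torus_box (\<lambda>x. (u t x - v t x) \<bullet> blinfun_apply (Dv t x) (u t x - v t x))"
    using spatial[OF su sv t] by simp
  with L show ?thesis by simp
qed


lemma sol_zero: "sol (\<lambda>t x. 0) (\<lambda>t x. 0) (\<lambda>t x. 0) (\<lambda>t x. 0) (\<lambda>t x. 0)"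
  unfolding sol_def periodic_field_def
  by (auto intro!: continuous_intros derivative_eq_intros simp: zero_blinfun.rep_eq)

lemma energy_const:
  assumes su: "sol u ut Du p gp" and t: "t \<ge> 0"
  shows "integral torus_box (\<lambda>x. (norm (u t x))\<^sup>2) = integral torus_box (\<lambda>x. (norm (u 0 x))\<^sup>2)"
proof -
  define E where "E s = integral torus_box (\<lambda>x. (norm (u s x - 0))\<^sup>2)" for s
  have "(E has_derivative (\<lambda>h. 0)) (at s within {0..})" if "s \<in> {0..}" for s
  proof -
    have "(E has_real_derivative 0) (at s within {0..})"
      using energy_deriv[OF su sol_zero, of s] that unfolding E_def by (simp add: zero_blinfun.rep_eq)
    moreover have "((*) (0::real)) = (\<lambda>h. 0)" by (simp add: fun_eq_iff)
    ultimately show ?thesis unfolding has_field_derivative_def by metis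
  qed
  then obtain c where "\<forall>s\<in>{0..}. E s = c"
    using has_derivative_zero_constant[of "{0..}" E] by (auto simp: convex_real_interval)
  then have "E t = E 0" using t by auto
  then show ?thesis unfolding E_def by simp
qed

lemma sol_translate:
  assumes su: "sol u ut Du p gp"
  shows "sol (\<lambda>t x. u t (x + a)) (\<lambda>t x. ut t (x + a)) (\<lambda>t x. Du t (x + a)) (\<lambda>t x. p t (x + a)) (\<lambda>t x. gp t (x + a))"
proof -
  note ju = sol_joint[OF su]
  have sh: "continuous_on ({0..} \<times> UNIV) (\<lambda>z. F (fst z) (snd z + a))"
    if "continuous_on ({0..} \<times> UNIV) (\<lambda>z. F (fst z) (snd z))" for F :: "real \<Rightarrow> real^2 \<Rightarrow> 'c::topological_space"
  proof -
    have "continuous_on ({0..} \<times> UNIV) ((\<lambda>z. F (fst z) (snd z)) \<circ> (\<lambda>z. (fst z, snd z + a)))"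
      by (rule continuous_on_compose[OF _ continuous_on_subset[OF that]]) (auto intro!: continuous_intros)
    then show ?thesis by (simp add: o_def)
  qed
  show ?thesis
    unfolding sol_def split_beta'
  proof (intro conjI sh ju allI impI)
    fix t :: real assume t: "t \<ge> 0"
    note fu = sol_facts[OF su t]
    show "periodic_field (\<lambda>x. u t (x + a))" "periodic_field (\<lambda>x. p t (x + a))"
      using fu(6,7) unfolding periodic_field_def by (metis add.assoc add.commute)+
    fix x
    show "((\<lambda>s. u s (x + a)) has_vector_derivative ut t (x + a)) (at t within {0..})"
      by (rule fu(12))
    show "((\<lambda>x. u t (x + a)) has_derivative blinfun_apply (Du t (x + a))) (at x)"
      by (rule has_derivative_compose[OF _ fu(8), of "\<lambda>x. x + a" "\<lambda>h. h", simplified])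
         (auto intro!: derivative_eq_intros)
    show "((\<lambda>x. p t (x + a)) has_derivative (\<lambda>h. gp t (x + a) \<bullet> h)) (at x)"
      by (rule has_derivative_compose[OF _ fu(9), of "\<lambda>x. x + a" "\<lambda>h. h", simplified])
         (auto intro!: derivative_eq_intros)
    show "blinfun_apply (Du t (x + a)) (axis 1 1) $ 1 + blinfun_apply (Du t (x + a)) (axis 2 1) $ 2 = 0"
      by (rule fu(10))
    show "ut t (x + a) + blinfun_apply (Du t (x + a)) (u t (x + a)) = - gp t (x + a)"
      by (rule fu(11))
  qed
qed


lemma sym_preserved:
  assumes su: "sol u ut Du p gp" and init: "\<And>x. u 0 (x + a) = u 0 x" and T: "T \<ge> 0"
  shows "u T (x + a) = u T x"
proof -
  note sa = sol_translate[OF su, of a]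
  note ju = sol_joint[OF su]
  define W where "W s = integral torus_box (\<lambda>x. (norm (u s (x + a) - u s x))\<^sup>2)" for s
  define X where "X s x = (u s (x + a) - u s x) \<bullet> blinfun_apply (Du s x) (u s (x + a) - u s x)" for s x
  have Wd: "(W has_real_derivative (-2 * integral torus_box (X s))) (at s within {0..})" if "s \<ge> 0" for s
    using energy_deriv[OF sa su that] unfolding W_def X_def by simp
  have W0: "W 0 = 0" by (simp add: W_def init)
  have contua: "continuous_on UNIV (\<lambda>x. u s (x + a))" if "s \<ge> 0" for s
    using sol_facts(1)[OF sa that] by simp
  have contu: "continuous_on UNIV (u s)" if "s \<ge> 0" for s
    using sol_facts(1)[OF su that] by simp
  have contw: "continuous_on UNIV (\<lambda>x. u s (x + a) - u s x)" if "s \<ge> 0" for s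
    using contua[OF that] contu[OF that] by (intro continuous_intros)
  have intw: "(\<lambda>x. (norm (u s (x + a) - u s x))\<^sup>2) integrable_on torus_box" if "s \<ge> 0" for s
  proof -
    have "continuous_on UNIV (\<lambda>x. (norm (u s (x + a) - u s x))\<^sup>2)"
      using contua[OF that] contu[OF that] by (intro continuous_intros)
    then show ?thesis unfolding box_eq by (rule integrable_continuous[OF continuous_on_subset]) auto
  qed
  have Wnn: "W s \<ge> 0" if "s \<ge> 0" for s
    unfolding W_def by (rule integral_nonneg[OF intw[OF that]]) simp
  have intX: "X s integrable_on torus_box" if "s \<ge> 0" for s
  proof -
    have "continuous_on UNIV (X s)"
      unfolding X_def using contua[OF that] contu[OF that] sol_facts(3)[OF su that] by (intro continuous_intros)
    then show ?thesis unfolding box_eq by (rule integrable_continuous[OF continuous_on_subset]) auto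
  qed
  show ?thesis
  proof (cases "T = 0")
    case True then show ?thesis using init by simp
  next
    case False
    then have Tp: "T > 0" using T by simp
    have "compact ((\<lambda>z. Du (fst z) (snd z)) ` ({0..T} \<times> torus_box))"
      unfolding box_eq
      by (intro compact_continuous_image continuous_on_subset[OF ju(3)] compact_Times) auto
    then have "bounded ((\<lambda>z. Du (fst z) (snd z)) ` ({0..T} \<times> torus_box))" by (rule compact_imp_bounded)
    then obtain C where C0: "C > 0" and Cb: "\<forall>y\<in>(\<lambda>z. Du (fst z) (snd z)) ` ({0..T} \<times> torus_box). norm y \<le> C"
      unfolding bounded_pos by blast
    have C: "\<And>z. z \<in> {0..T} \<times> torus_box \<Longrightarrow> norm (Du (fst z) (snd z)) \<le> C"
      using Cb by blast
    have Wle: "-2 * integral torus_box (X s) \<le> 2 * C * W s" if s: "s \<in> {0..T}" for s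
    proof -
      have s0: "s \<ge> 0" using s by simp
      have "integral torus_box (\<lambda>x. - X s x) \<le> integral torus_box (\<lambda>x. C * (norm (u s (x + a) - u s x))\<^sup>2)"
      proof (rule integral_le)
        show "(\<lambda>x. - X s x) integrable_on torus_box" using intX[OF s0] by (rule integrable_neg)
        show "(\<lambda>x. C * (norm (u s (x + a) - u s x))\<^sup>2) integrable_on torus_box"
          using integrable_on_cmult_left[OF intw[OF s0], of C] by simp
        fix x assume x: "x \<in> torus_box"
        define w where "w = u s (x + a) - u s x"
        have "- X s x \<le> \<bar>w \<bullet> blinfun_apply (Du s x) w\<bar>" unfolding X_def w_def by simp
        also have "\<dots> \<le> norm w * norm (blinfun_apply (Du s x) w)" by (rule Cauchy_Schwarz_ineq2)
        also have "\<dots> \<le> norm w * (norm (Du s x) * norm w)"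
          by (intro mult_left_mono norm_blinfun) simp
        also have "\<dots> \<le> norm w * (C * norm w)"
          using C[of "(s, x)"] s x by (intro mult_left_mono mult_right_mono) auto
        finally show "- X s x \<le> C * (norm (u s (x + a) - u s x))\<^sup>2"
          unfolding w_def by (simp add: power2_eq_square algebra_simps)
      qed
      then have "- integral torus_box (X s) \<le> C * W s" unfolding W_def by (simp add: integral_neg)
      then show ?thesis by linarith
    qed
    define F where "F s = exp (- 2 * C * s) * W s" for s
    define D where "D s = exp (- 2 * C * s) * (- 2 * C) * W s + exp (- 2 * C * s) * (-2 * integral torus_box (X s))" for s
    have Fd: "(F has_derivative (\<lambda>h. D s * h)) (at s within {0..T})" if s: "s \<in> {0..T}" for s
    proof -
      have "(F has_real_derivative D s) (at s within {0..})"
        unfolding F_def D_def using s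
        by (auto intro!: derivative_eq_intros Wd simp: algebra_simps)
      then have "(F has_real_derivative D s) (at s within {0..T})"
        by (rule DERIV_subset) auto
      then show ?thesis unfolding has_field_derivative_def by simp
    qed
    obtain \<xi> where \<xi>: "\<xi> \<in> {0<..<T}" and mv: "F T - F 0 = D \<xi> * (T - 0)"
      using mvt_simple[OF Tp, of F "\<lambda>s h. D s * h"] Fd by auto
    have "D \<xi> = exp (- 2 * C * \<xi>) * (-2 * integral torus_box (X \<xi>) - 2*C * W \<xi>)"
      unfolding D_def by (simp add: algebra_simps)
    also have "\<dots> \<le> 0"
      using Wle[of \<xi>] \<xi> by (intro mult_nonneg_nonpos) auto
    finally have "F T \<le> 0" using mv W0 Tp unfolding F_def by (simp add: mult_nonpos_nonneg)
    then have "W T \<le> 0" unfolding F_def by (simp add: mult_le_0_iff)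
    then have WT: "W T = 0" using Wnn[OF T] by simp
    have "((\<lambda>x. (norm (u T (x + a) - u T x))\<^sup>2) has_integral 0) (cbox 0 (\<chi> j. 2*pi))"
      using integrable_integral[OF intw[OF T]] WT unfolding W_def box_eq by simp
    then have z: "(norm (u T (y + a) - u T y))\<^sup>2 = 0" if "y \<in> torus_box" for y
      using that unfolding box_eq
    proof (intro has_integral_0_cbox_imp_0[where f="\<lambda>x. (norm (u T (x + a) - u T x))\<^sup>2"])
      have "continuous_on UNIV (\<lambda>x. (norm (u T (x + a) - u T x))\<^sup>2)"
        using contua[OF T] contu[OF T] by (intro continuous_intros)
      then show "continuous_on (cbox 0 (\<chi> j. 2*pi)) (\<lambda>x. (norm (u T (x + a) - u T x))\<^sup>2)"
        by (rule continuous_on_subset) auto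
      show "box 0 (\<chi> j. 2*pi) \<noteq> ({}::(real^2) set)"
        by (auto simp: box_ne_empty Basis_vec_def inner_axis axis_nth2 cart_eq_inner_axis[symmetric])
    qed auto
    have per: "periodic_field (\<lambda>x. u T (x + a) - u T x)"
      using sol_facts(6)[OF sa T] sol_facts(6)[OF su T] unfolding periodic_field_def by simp
    have "u T (x + a) - u T x = 0"
      by (rule periodic_zero_on_box[OF per]) (use z in simp)
    then show ?thesis by simp
  qed
qed


lemma quad_cs:
  fixes A B c :: real
  assumes q: "\<And>l. 0 \<le> A - 2*l*c + l^2 * B" and A: "0 \<le> A" and B: "0 \<le> B"
  shows "c^2 \<le> A * B"
proof (cases "B = 0")
  case True
  show ?thesis
  proof (cases "c = 0")
    case True then show ?thesis using A B by simp
  next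
    case False
    have "0 \<le> A - 2*((A+1)/(2*c))*c + ((A+1)/(2*c))^2 * B" by (rule q)
    then have "0 \<le> A - (A + 1)" using False \<open>B = 0\<close> by (simp add: field_simps)
    then show ?thesis by simp
  qed
next
  case False
  then have Bp: "B > 0" using B by simp
  have "0 \<le> A - 2*(c/B)*c + (c/B)^2 * B" by (rule q)
  also have "\<dots> = A - c^2 / B" using Bp by (simp add: field_simps power2_eq_square)
  finally have "c^2 / B \<le> A" by simp
  then show ?thesis using Bp by (simp add: pos_divide_le_eq mult.commute)
qed

lemma Hnorm_diff:
  fixes f g :: "real^2 \<Rightarrow> real^2"
  assumes cf: "continuous_on UNIV f" and cg: "continuous_on UNIV g"
  shows "\<bar>H_norm f - H_norm g\<bar> \<le> H_norm (\<lambda>x. f x - g x)"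
proof -
  have int: "h integrable_on torus_box" if "continuous_on UNIV h" for h :: "real^2 \<Rightarrow> real"
    unfolding box_eq by (rule integrable_continuous[OF continuous_on_subset[OF that]]) auto
  have iA: "(\<lambda>x. (norm (f x))\<^sup>2) integrable_on torus_box" by (rule int) (intro continuous_intros cf)
  have iB: "(\<lambda>x. (norm (g x))\<^sup>2) integrable_on torus_box" by (rule int) (intro continuous_intros cg)
  have iC: "(\<lambda>x. f x \<bullet> g x) integrable_on torus_box" by (rule int) (intro continuous_intros cf cg)
  define A where "A = integral torus_box (\<lambda>x. (norm (f x))\<^sup>2)"
  define B where "B = integral torus_box (\<lambda>x. (norm (g x))\<^sup>2)"
  define C where "C = integral torus_box (\<lambda>x. f x \<bullet> g x)"
  have A0: "0 \<le> A" unfolding A_def by (rule integral_nonneg[OF iA]) simp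
  have B0: "0 \<le> B" unfolding B_def by (rule integral_nonneg[OF iB]) simp
  have expand: "integral torus_box (\<lambda>x. (norm (f x - l *\<^sub>R g x))\<^sup>2) = A - 2*l*C + l^2 * B" for l
  proof -
    have pw: "(norm (f x - l *\<^sub>R g x))\<^sup>2 = ((norm (f x))\<^sup>2 - (2*l) * (f x \<bullet> g x)) + l^2 * (norm (g x))\<^sup>2" for x
      unfolding power2_norm_eq_inner by (simp add: inner_diff_left inner_diff_right inner_commute[of "g x" "f x"] algebra_simps power2_eq_square)
    have "integral torus_box (\<lambda>x. ((norm (f x))\<^sup>2 - (2*l) * (f x \<bullet> g x)) + l^2 * (norm (g x))\<^sup>2)
       = integral torus_box (\<lambda>x. (norm (f x))\<^sup>2 - (2*l) * (f x \<bullet> g x)) + integral torus_box (\<lambda>x. l^2 * (norm (g x))\<^sup>2)"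
      by (rule integral_add) (auto intro!: integrable_diff iA integrable_on_cmult_left[OF iC, simplified] integrable_on_cmult_left[OF iB, simplified])
    also have "\<dots> = A - 2*l*C + l^2 * B"
      unfolding A_def B_def C_def
      by (subst integral_diff) (auto intro!: iA integrable_on_cmult_left[OF iC, simplified])
    finally show ?thesis unfolding pw .
  qed
  have nn: "0 \<le> A - 2*l*C + l^2 * B" for l
  proof -
    have "(\<lambda>x. (norm (f x - l *\<^sub>R g x))\<^sup>2) integrable_on torus_box" by (rule int) (intro continuous_intros cf cg)
    then have "0 \<le> integral torus_box (\<lambda>x. (norm (f x - l *\<^sub>R g x))\<^sup>2)" by (rule integral_nonneg) simp
    then show ?thesis using expand by simp
  qed
  have cs: "C^2 \<le> A * B" by (rule quad_cs[OF nn A0 B0])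
  have "C \<le> sqrt A * sqrt B"
  proof -
    have "C \<le> \<bar>C\<bar>" by simp
    also have "\<bar>C\<bar> = sqrt (C^2)" by simp
    also have "\<dots> \<le> sqrt (A * B)" using cs by (rule real_sqrt_le_mono)
    also have "\<dots> = sqrt A * sqrt B" by (simp add: real_sqrt_mult)
    finally show ?thesis .
  qed
  then have "(sqrt A - sqrt B)^2 \<le> A - 2*1*C + 1^2 * B"
    using A0 B0 by (simp add: power2_eq_square algebra_simps)
  also have "\<dots> = integral torus_box (\<lambda>x. (norm (f x - g x))\<^sup>2)" using expand[of 1] by simp
  finally have "sqrt ((sqrt A - sqrt B)^2) \<le> sqrt (integral torus_box (\<lambda>x. (norm (f x - g x))\<^sup>2))"
    by (rule real_sqrt_le_mono)
  then show ?thesis unfolding H_norm_def A_def[symmetric] B_def[symmetric] by simp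
qed


lemma mode_bound:
  fixes k :: int and M :: real
  assumes n: "n \<in> modes M" and Mk: "M < real_of_int \<bar>k\<bar>"
  shows "\<bar>fst n\<bar> < \<bar>k\<bar>" "\<bar>snd n\<bar> < \<bar>k\<bar>" "n \<noteq> (0,0)"
proof -
  have n0: "n \<noteq> (0,0)" and le: "real_of_int (fst n)^2 + real_of_int (snd n)^2 \<le> M\<^sup>2" and M0: "0 \<le> M"
    using n unfolding modes_def by auto
  have "M\<^sup>2 < (real_of_int \<bar>k\<bar>)\<^sup>2" using M0 Mk by (intro power_strict_mono) auto
  then have "real_of_int (fst n)^2 < (real_of_int \<bar>k\<bar>)\<^sup>2" "real_of_int (snd n)^2 < (real_of_int \<bar>k\<bar>)\<^sup>2"
    using le by (smt (verit) zero_le_power2)+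
  then have sq1: "(real_of_int \<bar>fst n\<bar>)^2 < (real_of_int \<bar>k\<bar>)\<^sup>2" and sq2: "(real_of_int \<bar>snd n\<bar>)^2 < (real_of_int \<bar>k\<bar>)\<^sup>2"
    by simp_all
  have "real_of_int \<bar>fst n\<bar> < real_of_int \<bar>k\<bar>" by (rule power_less_imp_less_base[OF sq1]) simp
  moreover have "real_of_int \<bar>snd n\<bar> < real_of_int \<bar>k\<bar>" by (rule power_less_imp_less_base[OF sq2]) simp
  ultimately have "real_of_int \<bar>fst n\<bar> < real_of_int \<bar>k\<bar>" "real_of_int \<bar>snd n\<bar> < real_of_int \<bar>k\<bar>" by blast+
  then show "\<bar>fst n\<bar> < \<bar>k\<bar>" "\<bar>snd n\<bar> < \<bar>k\<bar>" by linarith+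
  show "n \<noteq> (0,0)" by (rule n0)
qed

theorem proposition4p3:
  fixes k :: int and uin1 uin2 :: "real^2 \<Rightarrow> real^2"
    and u1 u2 :: "real \<Rightarrow> real^2 \<Rightarrow> real^2"
  assumes "k \<noteq> 0"
    and "uin1 \<in> V3" and "uin2 \<in> V3"
    and "\<forall>x (i::2). uin1 (x + (2 * pi / real_of_int k) *\<^sub>R axis i 1) = uin1 x"
    and "\<forall>x (i::2). uin2 (x + (2 * pi / real_of_int k) *\<^sub>R axis i 1) = uin2 x"
    and "H_norm uin1 \<noteq> H_norm uin2"
    and "euler_solution u1 uin1" and "euler_solution u2 uin2"
  shows "(\<forall>M::real. M < real_of_int \<bar>k\<bar> \<longrightarrow>
            (\<forall>t\<ge>0. P_proj M (\<lambda>x. u1 t x - u2 t x) = (\<lambda>x. 0))) \<and>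
         Limsup at_top (\<lambda>t::real. ereal (H_norm (\<lambda>x. u1 t x - u2 t x))) > 0"
proof -
  note k = assms(1)
  obtain ut1 Du1 p1 gp1 where s1: "sol u1 ut1 Du1 p1 gp1" using euler_sol[OF assms(7)] by blast
  obtain ut2 Du2 p2 gp2 where s2: "sol u2 ut2 Du2 p2 gp2" using euler_sol[OF assms(8)] by blast
  have i1: "u1 0 = uin1" and i2: "u2 0 = uin2"
    using assms(7,8) unfolding euler_solution_def by auto
  have sym1: "u1 t (x + (2 * pi / real_of_int k) *\<^sub>R axis i 1) = u1 t x" if "t \<ge> 0" for t x i
    by (rule sym_preserved[OF s1 _ that]) (use assms(4) i1 in simp)
  have sym2: "u2 t (x + (2 * pi / real_of_int k) *\<^sub>R axis i 1) = u2 t x" if "t \<ge> 0" for t x i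
    by (rule sym_preserved[OF s2 _ that]) (use assms(5) i2 in simp)
  have part1: "P_proj M (\<lambda>x. u1 t x - u2 t x) = (\<lambda>x. 0)" if M: "M < real_of_int \<bar>k\<bar>" and t: "t \<ge> 0" for M t
  proof -
    define f where "f = (\<lambda>x. u1 t x - u2 t x)"
    have cf: "continuous_on UNIV f" unfolding f_def
      using sol_facts(1)[OF s1 t] sol_facts(1)[OF s2 t] by (intro continuous_intros)
    have pf: "periodic_field f" unfolding f_def
      using sol_facts(6)[OF s1 t] sol_facts(6)[OF s2 t] unfolding periodic_field_def by simp
    have sf: "f (x + (2 * pi / real_of_int k) *\<^sub>R axis i 1) = f x" for x i
      unfolding f_def using sym1[OF t] sym2[OF t] by simp
    have fc: "fourier_coeff f j n = 0" if n: "n \<in> modes M" for j n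
    proof -
      note mb = mode_bound[OF n M]
      show ?thesis
      proof (cases "fst n = 0")
        case False
        show ?thesis by (rule fourier_vanish[OF cf pf sf k, where i=1 and nn="fst n"]) (use False mb in auto)
      next
        case True
        then have "snd n \<noteq> 0" using mb(3) by (cases n) auto
        show ?thesis by (rule fourier_vanish[OF cf pf sf k, where i=2 and nn="snd n"]) (use \<open>snd n \<noteq> 0\<close> mb in auto)
      qed
    qed
    show ?thesis
      unfolding f_def[symmetric] P_proj_def
      by (rule ext) (simp add: fc vec_eq_iff)
  qed
  have en: "H_norm (u t) = H_norm (u 0)" if "sol u ut Du p gp" "t \<ge> 0" for u ut Du p gp t
    unfolding H_norm_def using energy_const[OF that] by simp
  define \<delta> where "\<delta> = \<bar>H_norm uin1 - H_norm uin2\<bar>"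
  have \<delta>: "\<delta> > 0" unfolding \<delta>_def using assms(6) by simp
  have lb: "\<delta> \<le> H_norm (\<lambda>x. u1 t x - u2 t x)" if t: "t \<ge> 0" for t
  proof -
    have "\<delta> = \<bar>H_norm (u1 t) - H_norm (u2 t)\<bar>"
      unfolding \<delta>_def using en[OF s1 t] en[OF s2 t] i1 i2 by simp
    also have "\<dots> \<le> H_norm (\<lambda>x. u1 t x - u2 t x)"
      by (rule Hnorm_diff[OF sol_facts(1)[OF s1 t] sol_facts(1)[OF s2 t]])
    finally show ?thesis .
  qed
  have "ereal \<delta> \<le> Limsup at_top (\<lambda>t::real. ereal (H_norm (\<lambda>x. u1 t x - u2 t x)))"
    by (rule le_Limsup) (auto intro!: eventually_mono[OF eventually_ge_at_top[of 0]] lb)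
  then have "Limsup at_top (\<lambda>t::real. ereal (H_norm (\<lambda>x. u1 t x - u2 t x))) > 0"
    using \<delta> by (meson ereal_less(2) le_less_trans not_le)
  then show ?thesis using part1 by blast
qed


end
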